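(* Let $\alpha>1$ and let $m_0\in\mathrm{BUC}([0,\infty))$ be non-decreasing with $m_0(0)=0$, $M=\sup m_0>0$, and suppose there is $c_0\in(0,\infty)$ with $m_0(\rho)<M$ for $\rho<c_0$ and $m_0(\rho)=M$ for $\rho\ge c_0$ (i.e. $c_0=\max\operatorname{supp}u_0$ for $u_0=(m_0)_\rho$). If $$\limsup_{\rho\to c_0^-}\frac{M-m_0(\rho)}{(c_0-\rho)^{\frac\alpha{\alpha-1}}}<+\infty,$$ then there is a waiting time: there exists $T>0$ such that the viscosity solution $m$ of the mass problem with datum $m_0$ satisfies $m(t,\rho)=M$ for all $\rho\ge c_0$ and all $t\in[0,T)$ (so the support of $u(t,\cdot)=m_\rho(t,\cdot)$ stays in $[0,c_0]$).
   Context: $\mathrm{BUC}$ denotes bounded uniformly continuous functions. The mass problem is $m_t+(m_\rho)_+^\alpha m=0$ ($t,\rho>0$), $m(t,0)=0$, $m(0,\cdot)=m_0$, understood in the viscosity sense: with Fréchet super/subdifferentials $D^\pm$, a continuous $m$ is a subsolution if $p_1+(p_2)_+^\alpha m\le0$ for $(p_1,p_2)\in D^+m(t,\rho)$, $m(0,\cdot)\le m_0$, $m(t,0)\le0$; a supersolution with reversed inequalities and $D^-$; a solution if both. Known facts used as standing background: for $m_0\in\mathrm{BUC}$ non-decreasing with $m_0(0)=0$ there is a unique $\mathrm{BUC}$ viscosity solution, and uniformly continuous sub- and supersolutions are ordered (comparison principle). *)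

theory Defs
  imports "HOL-Analysis.Analysis"
begin

definition closed_quad :: "(real \<times> real) set" where
  "closed_quad = {0..} \<times> {0..}"

definition open_quad :: "(real \<times> real) set" where
  "open_quad = {0<..} \<times> {0<..}"

definition BUC2 :: "(real \<Rightarrow> real \<Rightarrow> real) \<Rightarrow> bool" where
  "BUC2 m \<longleftrightarrow> bounded ((\<lambda>(t, r). m t r) ` closed_quad)
     \<and> uniformly_continuous_on closed_quad (\<lambda>(t, r). m t r)"

definition BUC1 :: "(real \<Rightarrow> real) \<Rightarrow> bool" where
  "BUC1 f \<longleftrightarrow> bounded (f ` {0..}) \<and> uniformly_continuous_on {0..} f"

definition frechet_super :: "(real \<Rightarrow> real \<Rightarrow> real) \<Rightarrow> real \<Rightarrow> real \<Rightarrow> (real \<times> real) set" where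
  "frechet_super m t \<rho> = {(p1, p2). \<forall>\<epsilon>>0. \<exists>\<delta>>0. \<forall>s r. (s, r) \<in> open_quad \<longrightarrow>
       dist (s, r) (t, \<rho>) < \<delta> \<longrightarrow>
       m s r - m t \<rho> - p1 * (s - t) - p2 * (r - \<rho>) \<le> \<epsilon> * dist (s, r) (t, \<rho>)}"

definition frechet_sub :: "(real \<Rightarrow> real \<Rightarrow> real) \<Rightarrow> real \<Rightarrow> real \<Rightarrow> (real \<times> real) set" where
  "frechet_sub m t \<rho> = {(p1, p2). \<forall>\<epsilon>>0. \<exists>\<delta>>0. \<forall>s r. (s, r) \<in> open_quad \<longrightarrow>
       dist (s, r) (t, \<rho>) < \<delta> \<longrightarrow>
       m s r - m t \<rho> - p1 * (s - t) - p2 * (r - \<rho>) \<ge> - \<epsilon> * dist (s, r) (t, \<rho>)}"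

definition ham :: "real \<Rightarrow> real \<Rightarrow> real \<Rightarrow> real" where
  "ham \<alpha> p2 v = (max p2 0) powr \<alpha> * v"

definition visc_subsol :: "real \<Rightarrow> (real \<Rightarrow> real) \<Rightarrow> (real \<Rightarrow> real \<Rightarrow> real) \<Rightarrow> bool" where
  "visc_subsol \<alpha> m0 m \<longleftrightarrow>
     continuous_on closed_quad (\<lambda>(t, r). m t r)
   \<and> (\<forall>t>0. \<forall>\<rho>>0. \<forall>(p1, p2) \<in> frechet_super m t \<rho>. p1 + ham \<alpha> p2 (m t \<rho>) \<le> 0)
   \<and> (\<forall>\<rho>\<ge>0. m 0 \<rho> \<le> m0 \<rho>)
   \<and> (\<forall>t\<ge>0. m t 0 \<le> 0)"

definition visc_supersol :: "real \<Rightarrow> (real \<Rightarrow> real) \<Rightarrow> (real \<Rightarrow> real \<Rightarrow> real) \<Rightarrow> bool" where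
  "visc_supersol \<alpha> m0 m \<longleftrightarrow>
     continuous_on closed_quad (\<lambda>(t, r). m t r)
   \<and> (\<forall>t>0. \<forall>\<rho>>0. \<forall>(p1, p2) \<in> frechet_sub m t \<rho>. p1 + ham \<alpha> p2 (m t \<rho>) \<ge> 0)
   \<and> (\<forall>\<rho>\<ge>0. m 0 \<rho> \<ge> m0 \<rho>)
   \<and> (\<forall>t\<ge>0. m t 0 \<ge> 0)"

definition visc_sol :: "real \<Rightarrow> (real \<Rightarrow> real) \<Rightarrow> (real \<Rightarrow> real \<Rightarrow> real) \<Rightarrow> bool" where
  "visc_sol \<alpha> m0 m \<longleftrightarrow> visc_subsol \<alpha> m0 m \<and> visc_supersol \<alpha> m0 m"

end

theory Submission
  imports Defs
begin


lemma sub_touch: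
  fixes m :: "real \<Rightarrow> real \<Rightarrow> real" and \<phi> :: "real \<times> real \<Rightarrow> real"
  assumes deriv: "(\<phi> has_derivative D) (at (t,\<rho>))"
  and D: "\<And>x y. D (x,y) = p1*x + p2*y"
  and d: "d > 0"
  and mn: "\<And>s r. (s,r) \<in> open_quad \<Longrightarrow> dist (s,r) (t,\<rho>) < d \<Longrightarrow> m s r - \<phi> (s,r) \<ge> m t \<rho> - \<phi> (t,\<rho>)"
  shows "(p1,p2) \<in> frechet_sub m t \<rho>"
  unfolding frechet_sub_def
proof (clarsimp)
  fix e :: real assume e: "e > 0"
  have "((\<lambda>y. ((\<phi> y - \<phi> (t,\<rho>)) - D (y - (t,\<rho>))) /\<^sub>R norm (y - (t,\<rho>))) \<longlongrightarrow> 0) (at (t,\<rho>))"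
    using deriv has_derivative_at_within[of \<phi> D "(t,\<rho>)" UNIV] by simp
  then have "eventually (\<lambda>y. dist (((\<phi> y - \<phi> (t,\<rho>)) - D (y - (t,\<rho>))) /\<^sub>R norm (y - (t,\<rho>))) 0 < e) (at (t,\<rho>))"
    using e tendstoD by blast
  then obtain d' where d': "d' > 0" and H: "\<And>y. y \<noteq> (t,\<rho>) \<Longrightarrow> dist y (t,\<rho>) < d' \<Longrightarrow>
      dist (((\<phi> y - \<phi> (t,\<rho>)) - D (y - (t,\<rho>))) /\<^sub>R norm (y - (t,\<rho>))) 0 < e"
    unfolding eventually_at by blast
  show "\<exists>\<delta>>0. \<forall>s r. (s, r) \<in> open_quad \<longrightarrow> dist (s, r) (t, \<rho>) < \<delta> \<longrightarrow>
        - (e * dist (s, r) (t, \<rho>)) \<le> m s r - m t \<rho> - p1 * (s - t) - p2 * (r - \<rho>)"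
  proof (intro exI[of _ "min d d'"] conjI allI impI)
    show "min d d' > 0" using d d' by simp
    fix s r assume sr: "(s,r) \<in> open_quad" "dist (s,r) (t,\<rho>) < min d d'"
    have m1: "m s r - \<phi> (s,r) \<ge> m t \<rho> - \<phi> (t,\<rho>)" using mn sr by simp
    show "- (e * dist (s, r) (t, \<rho>)) \<le> m s r - m t \<rho> - p1 * (s - t) - p2 * (r - \<rho>)"
    proof (cases "(s,r) = (t,\<rho>)")
      case True then show ?thesis by simp
    next
      case False
      have nz: "norm ((s,r) - (t,\<rho>)) > 0" using False by (simp add: zero_prod_def)
      have "dist (((\<phi> (s,r) - \<phi> (t,\<rho>)) - D ((s,r) - (t,\<rho>))) /\<^sub>R norm ((s,r) - (t,\<rho>))) 0 < e"
        using H[OF False] sr by simp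
      then have "\<bar>(\<phi> (s,r) - \<phi> (t,\<rho>)) - D ((s,r) - (t,\<rho>))\<bar> / norm ((s,r) - (t,\<rho>)) < e"
        by (simp add: dist_real_def divide_inverse_commute)
      then have "\<bar>(\<phi> (s,r) - \<phi> (t,\<rho>)) - D ((s,r) - (t,\<rho>))\<bar> < e * norm ((s,r) - (t,\<rho>))"
        using nz by (simp add: divide_less_eq)
      moreover have "D ((s,r) - (t,\<rho>)) = p1 * (s - t) + p2 * (r - \<rho>)" using D by simp
      moreover have "dist (s, r) (t, \<rho>) = norm ((s,r) - (t,\<rho>))" by (simp add: dist_norm)
      ultimately show ?thesis using m1 by (smt (verit))
    qed
  qed
qed



definition gf :: "real \<Rightarrow> real \<Rightarrow> real \<Rightarrow> real" where
  "gf c b r = (if r < c then (c - r) powr b else 0)"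
definition gd :: "real \<Rightarrow> real \<Rightarrow> real \<Rightarrow> real" where
  "gd c b r = (if r < c then - (b * (c - r) powr (b - 1)) else 0)"

lemma gf_deriv:
  assumes b: "b > 1"
  shows "(gf c b has_real_derivative gd c b r) (at r)"
proof -
  consider "r < c" | "r > c" | "r = c" by linarith
  then show ?thesis
  proof cases
    case 1
    have d: "((\<lambda>x. (c - x) powr b) has_real_derivative b * (c - r) powr (b - of_nat 1) * (-1)) (at r)"
      by (rule DERIV_fun_powr) (use 1 in \<open>auto intro!: derivative_eq_intros\<close>)
    show ?thesis
      by (rule has_field_derivative_transform_within_open[OF _ open_lessThan[of c]])
         (use d 1 in \<open>auto simp: gf_def gd_def\<close>)
  next
    case 2
    have d: "((\<lambda>x. 0) has_real_derivative 0) (at r)" by simp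
    show ?thesis
      by (rule has_field_derivative_transform_within_open[OF _ open_greaterThan[of c]])
         (use d 2 in \<open>auto simp: gf_def gd_def\<close>)
  next
    case 3
    have "((\<lambda>y. (gf c b y - gf c b c) / (y - c)) \<longlongrightarrow> 0) (at c)"
    proof (rule Lim_null_comparison)
      show "\<forall>\<^sub>F x in at c. norm ((gf c b x - gf c b c) / (x - c)) \<le> \<bar>x - c\<bar> powr (b - 1)"
      proof (rule always_eventually, rule allI)
        fix x
        show "norm ((gf c b x - gf c b c) / (x - c)) \<le> \<bar>x - c\<bar> powr (b - 1)"
        proof (cases "x < c")
          case True
          have "(c - x) powr b = (c - x) powr (b - 1) * (c - x)"
            using True by (simp add: powr_diff)
          then show ?thesis using True by (simp add: gf_def abs_div)
        next
          case False then show ?thesis by (simp add: gf_def)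
        qed
      qed
      have "((\<lambda>x. \<bar>x - c\<bar> powr (b - 1)) \<longlongrightarrow> \<bar>c - c\<bar> powr (b - 1)) (at c)"
        using b by (intro tendsto_intros) auto
      then show "((\<lambda>x. \<bar>x - c\<bar> powr (b - 1)) \<longlongrightarrow> 0) (at c)" using b by simp
    qed
    then show ?thesis using 3 by (simp add: has_field_derivative_iff gd_def)
  qed
qed



lemma powr_small: "0 < (e::real) \<Longrightarrow> e \<le> 1 \<Longrightarrow> a > 1 \<Longrightarrow> e powr a \<le> e"
  by (metis powr_le1 powr_mono' powr_one_gt_zero_iff less_imp_le order.refl) 

lemma BUC2_bound:
  assumes "BUC2 m" obtains B where "B \<ge> 0" "\<And>t r. t \<ge> 0 \<Longrightarrow> r \<ge> 0 \<Longrightarrow> \<bar>m t r\<bar> \<le> B"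
proof -
  from assms have "bounded ((\<lambda>(t, r). m t r) ` closed_quad)" by (simp add: BUC2_def)
  then obtain a where a: "\<forall>x\<in>(\<lambda>(t, r). m t r) ` closed_quad. norm x \<le> a" by (auto simp: bounded_iff)
  have "\<bar>m t r\<bar> \<le> max a 0" if "t \<ge> 0" "r \<ge> 0" for t r
    using a that by (force simp: closed_quad_def)
  then show ?thesis using that[of "max a 0"] by simp
qed



lemma upper_core:
  fixes m :: "real \<Rightarrow> real \<Rightarrow> real"
  assumes a: "\<alpha> > 1" and sub: "visc_subsol \<alpha> m0 m"
    and m0M: "\<And>\<rho>. \<rho> \<ge> 0 \<Longrightarrow> m0 \<rho> \<le> M" and M: "M \<ge> 0"
    and B: "B \<ge> 0" "\<And>t r. t \<ge> 0 \<Longrightarrow> r \<ge> 0 \<Longrightarrow> \<bar>m t r\<bar> \<le> B"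
    and de: "\<delta> > 0" "\<epsilon> > 0" "\<epsilon> \<le> 1" "\<epsilon> * B < \<delta>"
    and tr: "t0 \<ge> 0" "r0 \<ge> 0"
  shows "m t0 r0 \<le> M + \<delta> * t0 + \<epsilon> * r0"
proof (rule ccontr)
  assume neg: "\<not> ?thesis"
  define F where "F = (\<lambda>z. m (fst z) (snd z) - M - \<delta> * fst z - \<epsilon> * snd z)"
  have F0: "F (t0,r0) > 0" using neg by (simp add: F_def)
  define R where "R = (B + M) / min \<delta> \<epsilon>"
  have mpos: "min \<delta> \<epsilon> > 0" using de by simp
  have outside: "F (t,r) < 0" if "t \<ge> 0" "r \<ge> 0" "\<not> (t \<le> R \<and> r \<le> R)" for t r
  proof -
    have "min \<delta> \<epsilon> * R = B + M" proof - have "min \<delta> \<epsilon> \<noteq> 0" using mpos by linarith then show ?thesis unfolding R_def by (rule times_divide_eq_right[THEN trans, OF nonzero_mult_div_cancel_left]) qed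
    moreover have "min \<delta> \<epsilon> * R < \<delta> * t + \<epsilon> * r"
    proof -
      have "min \<delta> \<epsilon> * R < min \<delta> \<epsilon> * max t r" using that mpos by (intro mult_strict_left_mono) auto
      also have "\<dots> \<le> \<delta> * t + \<epsilon> * r" using that de
        
      proof (cases "t \<le> r")
        case True
        have "min \<delta> \<epsilon> * r \<le> \<epsilon> * r" using that by (intro mult_right_mono) auto
        moreover have "\<delta> * t \<ge> 0" using that de by simp
        ultimately show ?thesis using True by (simp add: max_def)
      next
        case False
        have "min \<delta> \<epsilon> * t \<le> \<delta> * t" using that by (intro mult_right_mono) auto
        moreover have "\<epsilon> * r \<ge> 0" using that de by simp
        ultimately show ?thesis using False by (simp add: max_def)
      qed
      finally show ?thesis .
    qed
    moreover have "m t r \<le> B" using B(2)[OF that(1,2)] by simp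
    ultimately show ?thesis using M by (simp add: F_def)
  qed
  define K where "K = cbox (0::real,0::real) (R,R)"
  have Kq: "K \<subseteq> closed_quad" by (auto simp: K_def closed_quad_def cbox_Pair_eq)
  have z0K: "(t0,r0) \<in> K" using outside[OF tr] F0 tr by (force simp: K_def cbox_Pair_eq)
  have contm: "continuous_on closed_quad (\<lambda>(t, r). m t r)" using sub by (simp add: visc_subsol_def)
  have contF: "continuous_on K F"
  proof -
    have "continuous_on K (\<lambda>(t, r). m t r)" using continuous_on_subset[OF contm Kq] .
    then have "continuous_on K (\<lambda>z. m (fst z) (snd z))" by (simp add: case_prod_beta')
    then show ?thesis unfolding F_def by (intro continuous_intros)
  qed
  obtain z1 where z1: "z1 \<in> K" "\<And>y. y \<in> K \<Longrightarrow> F y \<le> F z1"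
    using continuous_attains_sup[OF compact_cbox[of "(0::real,0::real)" "(R,R)", folded K_def] _ contF] z0K by blast
  obtain t1 r1 where z1e: "z1 = (t1,r1)" by (cases z1)
  have F1: "F (t1,r1) > 0" using z1 z0K F0 z1e by force
  have t1r1: "t1 \<ge> 0" "r1 \<ge> 0" using z1(1) z1e by (auto simp: K_def cbox_Pair_eq)
  have glob: "F (s,r) \<le> F (t1,r1)" if "s \<ge> 0" "r \<ge> 0" for s r
  proof (cases "s \<le> R \<and> r \<le> R")
    case True then have "(s,r) \<in> K" using that by (auto simp: K_def cbox_Pair_eq)
    then show ?thesis using z1 z1e by simp
  next
    case False then show ?thesis using outside[OF that False] F1 by simp
  qed
  have sub2: "\<forall>t>0. \<forall>\<rho>>0. \<forall>(p1, p2) \<in> frechet_super m t \<rho>. p1 + ham \<alpha> p2 (m t \<rho>) \<le> 0"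
    and ini: "\<forall>\<rho>\<ge>0. m 0 \<rho> \<le> m0 \<rho>" and bd: "\<forall>t\<ge>0. m t 0 \<le> 0"
    using sub by (auto simp: visc_subsol_def)
  have t1p: "t1 > 0"
  proof (rule ccontr)
    assume "\<not> t1 > 0" then have "t1 = 0" using t1r1 by simp
    then have "F (t1,r1) \<le> 0" using ini m0M[OF t1r1(2)] t1r1 de
      by (simp add: F_def) (smt (verit, best) mult_nonneg_nonneg)
    then show False using F1 by simp
  qed
  have r1p: "r1 > 0"
  proof (rule ccontr)
    assume "\<not> r1 > 0" then have "r1 = 0" using t1r1 by simp
    then have "F (t1,r1) \<le> 0" using bd t1r1 de M
      by (simp add: F_def) (smt (verit, best) mult_nonneg_nonneg)
    then show False using F1 by simp
  qed
  have fs: "(\<delta>, \<epsilon>) \<in> frechet_super m t1 r1"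
    unfolding frechet_super_def
  proof (clarsimp)
    fix e :: real assume e: "e > 0"
    show "\<exists>\<delta>'>0. \<forall>s r. (s, r) \<in> open_quad \<longrightarrow> dist (s, r) (t1, r1) < \<delta>' \<longrightarrow>
       m s r - m t1 r1 - \<delta> * (s - t1) - \<epsilon> * (r - r1) \<le> e * dist (s, r) (t1, r1)"
    proof (intro exI[of _ 1] conjI allI impI)
      fix s r assume "(s, r) \<in> open_quad"
      then have "F (s,r) \<le> F (t1,r1)" using glob by (auto simp: open_quad_def)
      then have "m s r - m t1 r1 - \<delta> * (s - t1) - \<epsilon> * (r - r1) \<le> 0" by (simp add: F_def algebra_simps)
      moreover have "e * dist (s, r) (t1, r1) \<ge> 0" using e by simp
      ultimately show "m s r - m t1 r1 - \<delta> * (s - t1) - \<epsilon> * (r - r1) \<le> e * dist (s, r) (t1, r1)" by linarith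
    qed simp
  qed
  have "\<delta> + ham \<alpha> \<epsilon> (m t1 r1) \<le> 0" using sub2 t1p r1p fs by blast
  moreover have "ham \<alpha> \<epsilon> (m t1 r1) \<ge> - (\<epsilon> * B)"
  proof -
    have p: "\<epsilon> powr \<alpha> \<le> \<epsilon>" using powr_small de a by simp
    have "m t1 r1 \<ge> -B" using B(2)[OF t1r1] by simp
    have "ham \<alpha> \<epsilon> (m t1 r1) = \<epsilon> powr \<alpha> * m t1 r1" using de by (simp add: ham_def)
    also have "\<dots> \<ge> \<epsilon> powr \<alpha> * (-B)" using \<open>m t1 r1 \<ge> -B\<close> by (intro mult_left_mono) auto
    also have "\<epsilon> powr \<alpha> * (-B) \<ge> \<epsilon> * (-B)" using p B(1) by (simp add: mult_right_mono)
    finally show ?thesis by simp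
  qed
  ultimately show False using de by linarith
qed

lemma upper:
  fixes m :: "real \<Rightarrow> real \<Rightarrow> real"
  assumes a: "\<alpha> > 1" and sub: "visc_subsol \<alpha> m0 m"
    and m0M: "\<And>\<rho>. \<rho> \<ge> 0 \<Longrightarrow> m0 \<rho> \<le> M" and M: "M \<ge> 0"
    and B: "B \<ge> 0" "\<And>t r. t \<ge> 0 \<Longrightarrow> r \<ge> 0 \<Longrightarrow> \<bar>m t r\<bar> \<le> B"
    and tr: "t \<ge> 0" "r \<ge> 0"
  shows "m t r \<le> M"
proof (rule ccontr)
  assume "\<not> ?thesis"
  define g where "g = m t r - M"
  have g: "g > 0" using \<open>\<not> m t r \<le> M\<close> by (simp add: g_def)
  define \<delta> where "\<delta> = g / (2 * (t + 1))"
  define \<epsilon> where "\<epsilon> = min 1 (min (\<delta> / (2 * (B + 1))) (g / (4 * (r + 1))))"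
  have dp: "\<delta> > 0" using g tr by (simp add: \<delta>_def)
  have ep: "\<epsilon> > 0" "\<epsilon> \<le> 1" using dp g tr B by (auto simp: \<epsilon>_def)
  have "\<epsilon> * B \<le> \<delta> / (2 * (B + 1)) * B" using ep B by (intro mult_right_mono) (auto simp: \<epsilon>_def)
  also have "\<dots> < \<delta>" using dp B(1) by (simp add: field_simps) (smt (verit) mult_nonneg_nonneg)
  finally have eB: "\<epsilon> * B < \<delta>" .
  have "m t r \<le> M + \<delta> * t + \<epsilon> * r" by (rule upper_core[OF a sub m0M M B dp ep eB tr])
  moreover have "\<delta> * t \<le> g / 2" using g tr by (simp add: \<delta>_def field_simps)
  moreover have "\<epsilon> * r \<le> g / 4"
  proof -
    have "\<epsilon> * r \<le> g / (4 * (r + 1)) * r" using ep tr by (intro mult_right_mono) (auto simp: \<epsilon>_def)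
    also have "g / (4 * (r + 1)) * r \<le> g / 4" using g tr by (simp add: field_simps)
    finally show ?thesis .
  qed
  ultimately have "m t r \<le> M + g/2 + g/4" by linarith
  then show False using g unfolding g_def by (simp add: field_simps)
qed



lemma phi_deriv:
  assumes b: "b > 1" and t1: "t1 < T"
  shows "((\<lambda>z. M - \<eta> / (T - fst z) - \<epsilon> * snd z - (a0 + K * fst z) * gf c0 b (snd z)) has_derivative
     (\<lambda>h. (- (\<eta> / (T - t1)^2) - K * gf c0 b r1) * fst h + (- \<epsilon> - (a0 + K * t1) * gd c0 b r1) * snd h)) (at (t1, r1))"
proof -
  have g: "((\<lambda>z. gf c0 b (snd z)) has_derivative (\<lambda>h. snd h * gd c0 b r1)) (at (t1,r1))"
    using DERIV_compose_FDERIV[where f="gf c0 b" and g=snd and x="(t1,r1)" and f'="gd c0 b r1" and g'=snd and s=UNIV] gf_deriv[OF b, of c0 r1]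
      has_derivative_snd[OF has_derivative_ident, of "at (t1,r1)"]
    by simp
  have tT: "T - t1 \<noteq> 0" using t1 by simp
  have f1: "((\<lambda>x. \<eta> / (T - x)) has_real_derivative \<eta> / (T - t1)^2) (at t1)"
    using tT by (auto intro!: derivative_eq_intros simp: power2_eq_square field_simps)
  have h1: "((\<lambda>z. \<eta> / (T - fst z)) has_derivative (\<lambda>h. fst h * \<eta> / (T - t1)^2)) (at (t1,r1))"
    using DERIV_compose_FDERIV[where f="\<lambda>x. \<eta> / (T - x)" and g=fst and x="(t1,r1)" and f'="\<eta> / (T - t1)^2" and g'=fst and s=UNIV] f1
      has_derivative_fst[OF has_derivative_ident, of "at (t1,r1)"]
    by simp
  have h2: "((\<lambda>z. \<epsilon> * snd z) has_derivative (\<lambda>h. \<epsilon> * snd h)) (at (t1,r1))"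
    by (rule derivative_eq_intros refl)+
  have ha: "((\<lambda>z. a0 + K * fst z) has_derivative (\<lambda>h. 0 + K * fst h)) (at (t1,r1))"
    by (rule has_derivative_add[OF has_derivative_const has_derivative_mult_right[OF has_derivative_fst[OF has_derivative_ident]]])
  have h3: "((\<lambda>z. (a0 + K * fst z) * gf c0 b (snd z)) has_derivative
      (\<lambda>h. (a0 + K * t1) * (snd h * gd c0 b r1) + K * fst h * gf c0 b r1)) (at (t1,r1))"
    using has_derivative_mult[OF ha g] by simp
  show ?thesis
    apply (rule has_derivative_eq_rhs)
     apply (rule has_derivative_diff[OF has_derivative_diff[OF has_derivative_diff[OF has_derivative_const h1] h2] h3])
    by (simp add: fun_eq_iff algebra_simps)
qed



lemma Xbound:
  assumes a: "\<alpha> > 1" and bdef: "\<beta> = \<alpha> / (\<alpha> - 1)" and a0: "a0 > 0" "a0 \<le> a" "a \<le> 2 * a0"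
    and e: "\<epsilon> > 0" and Kdef: "K = (2*a0) powr \<alpha> * \<beta> powr \<alpha> * M" and M: "M > 0"
  shows "max (- \<epsilon> - a * gd c0 \<beta> r) 0 powr \<alpha> * M \<le> K * gf c0 \<beta> r"
proof (cases "r < c0")
  case False
  then have "max (- \<epsilon> - a * gd c0 \<beta> r) 0 = 0" using e by (simp add: gd_def)
  then show ?thesis using False by (simp add: gf_def)
next
  case True
  have bpos: "\<beta> > 0" using a bdef by simp
  define Y where "Y = a * \<beta> * (c0 - r) powr (\<beta> - 1)"
  have Y0: "Y \<ge> 0" using a0 bpos by (simp add: Y_def)
  have "max (- \<epsilon> - a * gd c0 \<beta> r) 0 \<le> Y"
    using True e Y0 by (simp add: gd_def Y_def)
  then have "max (- \<epsilon> - a * gd c0 \<beta> r) 0 powr \<alpha> \<le> Y powr \<alpha>"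
    using a by (intro powr_mono2) auto
  also have "Y powr \<alpha> = a powr \<alpha> * \<beta> powr \<alpha> * (c0 - r) powr ((\<beta> - 1) * \<alpha>)"
    using a0 bpos True by (simp add: Y_def powr_mult powr_powr)
  also have "(\<beta> - 1) * \<alpha> = \<beta>" using a bdef by (simp add: field_simps)
  also have "a powr \<alpha> \<le> (2*a0) powr \<alpha>" using a0 a by (intro powr_mono2) auto
  then have "a powr \<alpha> * \<beta> powr \<alpha> * (c0 - r) powr \<beta> \<le> (2*a0) powr \<alpha> * \<beta> powr \<alpha> * (c0 - r) powr \<beta>"
    by (intro mult_right_mono) auto
  finally have "max (- \<epsilon> - a * gd c0 \<beta> r) 0 powr \<alpha> \<le> (2*a0) powr \<alpha> * \<beta> powr \<alpha> * (c0 - r) powr \<beta>" .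
  then have "max (- \<epsilon> - a * gd c0 \<beta> r) 0 powr \<alpha> * M \<le> (2*a0) powr \<alpha> * \<beta> powr \<alpha> * (c0 - r) powr \<beta> * M"
    using M by (intro mult_right_mono) auto
  then show ?thesis using True by (simp add: Kdef gf_def algebra_simps)
qed



lemma gf_nonneg: "gf c b r \<ge> 0" by (simp add: gf_def)

lemma lower_core:
  fixes m :: "real \<Rightarrow> real \<Rightarrow> real"
  assumes a: "\<alpha> > 1" and sup: "visc_supersol \<alpha> m0 m"
    and bdef: "\<beta> = \<alpha> / (\<alpha> - 1)"
    and mM: "\<And>t r. t \<ge> 0 \<Longrightarrow> r \<ge> 0 \<Longrightarrow> m t r \<le> M"
    and B: "B \<ge> 0" "\<And>t r. t \<ge> 0 \<Longrightarrow> r \<ge> 0 \<Longrightarrow> \<bar>m t r\<bar> \<le> B"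
    and M: "M > 0" and a0: "a0 > 0"
    and init: "\<And>r. r \<ge> 0 \<Longrightarrow> M - a0 * gf c0 \<beta> r \<le> m0 r"
    and bnd0: "a0 * gf c0 \<beta> 0 \<ge> M"
    and Kdef: "K = (2*a0) powr \<alpha> * \<beta> powr \<alpha> * M" and Tdef: "T = a0 / K"
    and pe: "\<eta> > 0" "\<epsilon> > 0" and tr: "0 \<le> t0" "t0 < T" "r0 \<ge> 0"
  shows "m t0 r0 \<ge> M - \<eta> / (T - t0) - \<epsilon> * r0 - (a0 + K * t0) * gf c0 \<beta> r0"
proof (rule ccontr)
  assume neg: "\<not> ?thesis"
  have b1: "\<beta> > 1" using a bdef by (simp add: less_divide_eq_1_pos)
  have Kp: "K > 0" using Kdef a0 M b1 by simp
  have Tp: "T > 0" using Tdef Kp a0 by simp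
  have KT: "K * T = a0" using Tdef Kp by simp
  define \<Phi> where "\<Phi> = (\<lambda>z::real\<times>real. M - \<eta> / (T - fst z) - \<epsilon> * snd z - (a0 + K * fst z) * gf c0 \<beta> (snd z))"
  define G where "G = (\<lambda>z. m (fst z) (snd z) - \<Phi> z)"
  have G0: "G (t0,r0) < 0" using neg by (simp add: G_def \<Phi>_def)
  define C where "C = B + M + 1"
  have Cp: "C > 0" using B M by (simp add: C_def)
  have Phi_le: "\<Phi> (t,r) \<le> M - \<eta> / (T - t) - \<epsilon> * r" if "0 \<le> t" "r \<ge> 0" for t r
  proof -
    have "(a0 + K * t) * gf c0 \<beta> r \<ge> 0" using a0 Kp that gf_nonneg by simp
    then show ?thesis by (simp add: \<Phi>_def)
  qed
  have outside: "G (t,r) > 0" if "0 \<le> t" "t < T" "r \<ge> 0" "\<not> (t \<le> T - \<eta> / C \<and> r \<le> C / \<epsilon>)" for t r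
  proof -
    have mb: "m t r \<ge> -B" using B(2)[OF that(1,3)] by simp
    have Tt: "T - t > 0" using that by simp
    have p1: "\<eta> / (T - t) > 0" using pe Tt by simp
    have p2: "\<epsilon> * r \<ge> 0" using pe that by simp
    have "\<eta> / (T - t) > C \<or> \<epsilon> * r > C"
    proof (cases "t \<le> T - \<eta> / C")
      case True
      then have "r > C / \<epsilon>" using that by simp
      then have "\<epsilon> * r > C" using pe by (simp add: field_simps)
      then show ?thesis by simp
    next
      case False
      then have "T - t < \<eta> / C" by simp
      then have "C * (T - t) < \<eta>" using Cp by (simp add: field_simps)
      then have "C < \<eta> / (T - t)" using Tt by (simp add: field_simps)
      then show ?thesis by simp
    qed
    then have "\<eta> / (T - t) + \<epsilon> * r > C" using p1 p2 by linarith
    then show ?thesis using Phi_le[OF that(1,3)] mb by (simp add: G_def C_def)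
  qed
  define Kc where "Kc = cbox (0::real, 0::real) (T - \<eta> / C, C / \<epsilon>)"
  have z0K: "(t0,r0) \<in> Kc" using outside[OF tr] G0 tr by (force simp: Kc_def cbox_Pair_eq)
  have KcD: "\<And>t r. (t,r) \<in> Kc \<Longrightarrow> 0 \<le> t \<and> t < T \<and> 0 \<le> r"
    using Cp pe by (auto simp: Kc_def cbox_Pair_eq intro: order.strict_trans1)
  have contm: "continuous_on closed_quad (\<lambda>(t, r). m t r)" using sup by (simp add: visc_supersol_def)
  have Kq: "Kc \<subseteq> closed_quad" using KcD by (force simp: closed_quad_def)
  have der: "\<And>t1 r1. t1 < T \<Longrightarrow> (\<Phi> has_derivative
     (\<lambda>h. (- (\<eta> / (T - t1)^2) - K * gf c0 \<beta> r1) * fst h + (- \<epsilon> - (a0 + K * t1) * gd c0 \<beta> r1) * snd h)) (at (t1, r1))"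
    unfolding \<Phi>_def by (rule phi_deriv[OF b1])
  have contG: "continuous_on Kc G"
  proof -
    have "continuous_on Kc (\<lambda>(t, r). m t r)" using continuous_on_subset[OF contm Kq] .
    then have c1: "continuous_on Kc (\<lambda>z. m (fst z) (snd z))" by (simp add: case_prod_beta')
    have c2: "continuous_on Kc \<Phi>"
    proof (rule continuous_at_imp_continuous_on, rule ballI)
      fix z assume "z \<in> Kc"
      then have "fst z < T" using KcD[of "fst z" "snd z"] by simp
      then show "isCont \<Phi> z" using der[of "fst z" "snd z"] has_derivative_continuous by fastforce
    qed
    show ?thesis unfolding G_def by (intro continuous_intros c1 c2)
  qed
  obtain z1 where z1: "z1 \<in> Kc" "\<And>y. y \<in> Kc \<Longrightarrow> G z1 \<le> G y"
    using continuous_attains_inf[OF compact_cbox[of "(0::real,0::real)" "(T - \<eta> / C, C / \<epsilon>)", folded Kc_def] _ contG] z0K by blast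
  obtain t1 r1 where z1e: "z1 = (t1,r1)" by (cases z1)
  have G1: "G (t1,r1) < 0" using z1 z0K G0 z1e by force
  have t1r1: "0 \<le> t1" "t1 < T" "0 \<le> r1" using z1(1) z1e KcD by auto
  have glob: "G (t1,r1) \<le> G (s,r)" if "0 \<le> s" "s < T" "r \<ge> 0" for s r
  proof (cases "(s,r) \<in> Kc")
    case True then show ?thesis using z1 z1e by simp
  next
    case False
    then have "\<not> (s \<le> T - \<eta> / C \<and> r \<le> C / \<epsilon>)" using that by (auto simp: Kc_def cbox_Pair_eq)
    then show ?thesis using outside[OF that] G1 by simp
  qed
  have sup2: "\<forall>t>0. \<forall>\<rho>>0. \<forall>(p1, p2) \<in> frechet_sub m t \<rho>. p1 + ham \<alpha> p2 (m t \<rho>) \<ge> 0"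
    and ini: "\<forall>\<rho>\<ge>0. m 0 \<rho> \<ge> m0 \<rho>" and bd: "\<forall>t\<ge>0. m t 0 \<ge> 0"
    using sup by (auto simp: visc_supersol_def)
  have t1p: "t1 > 0"
  proof (rule ccontr)
    assume "\<not> t1 > 0" then have t10: "t1 = 0" using t1r1 by simp
    have "\<Phi> (0, r1) \<le> M - a0 * gf c0 \<beta> r1"
      using pe Tp t1r1 by (simp add: \<Phi>_def) (smt (verit) divide_pos_pos mult_nonneg_nonneg)
    moreover have "m 0 r1 \<ge> m0 r1" using ini t1r1 by simp
    ultimately have "G (t1,r1) \<ge> 0" using init[OF t1r1(3)] t10 by (simp add: G_def)
    then show False using G1 by simp
  qed
  have r1p: "r1 > 0"
  proof (rule ccontr)
    assume "\<not> r1 > 0" then have r10: "r1 = 0" using t1r1 by simp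
    have "(a0 + K * t1) * gf c0 \<beta> 0 \<ge> a0 * gf c0 \<beta> 0"
      using Kp t1r1 gf_nonneg[of c0 \<beta> 0] by (simp add: distrib_right)
    moreover have "\<eta> / (T - t1) > 0" using pe t1r1 by simp
    ultimately have "\<Phi> (t1, 0) \<le> 0" using bnd0 by (simp add: \<Phi>_def)
    moreover have "m t1 0 \<ge> 0" using bd t1r1 by simp
    ultimately have "G (t1,r1) \<ge> 0" using r10 by (simp add: G_def)
    then show False using G1 by simp
  qed
  define p1 where "p1 = - (\<eta> / (T - t1)^2) - K * gf c0 \<beta> r1"
  define p2 where "p2 = - \<epsilon> - (a0 + K * t1) * gd c0 \<beta> r1"
  have fs: "(p1, p2) \<in> frechet_sub m t1 r1"
  proof (rule sub_touch[where \<phi> = \<Phi> and d = "T - t1"])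
    show "(\<Phi> has_derivative (\<lambda>h. p1 * fst h + p2 * snd h)) (at (t1, r1))"
      unfolding p1_def p2_def using der[OF t1r1(2)] .
    show "\<And>x y. p1 * fst (x, y) + p2 * snd (x, y) = p1 * x + p2 * y" by simp
    show "T - t1 > 0" using t1r1 by simp
    fix s r assume sr: "(s, r) \<in> open_quad" "dist (s, r) (t1, r1) < T - t1"
    have "\<bar>s - t1\<bar> \<le> dist (s, r) (t1, r1)"
      by (metis dist_Pair_Pair dist_real_def real_sqrt_sum_squares_ge1)
    then have "s < T" using sr by linarith
    then have "G (t1,r1) \<le> G (s,r)" using glob sr(1) by (auto simp: open_quad_def)
    then show "m t1 r1 - \<Phi> (t1, r1) \<le> m s r - \<Phi> (s, r)" by (simp add: G_def)
  qed
  have ineq: "p1 + ham \<alpha> p2 (m t1 r1) \<ge> 0" using sup2 t1p r1p fs by blast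
  define X where "X = max p2 0 powr \<alpha>"
  have X0: "X \<ge> 0" by (simp add: X_def)
  have XM: "X * M \<le> K * gf c0 \<beta> r1"
    unfolding X_def p2_def
  proof (rule Xbound[OF a bdef a0])
    show "a0 \<le> a0 + K * t1" using Kp t1r1 by simp
    have "K * t1 \<le> K * T" using Kp t1r1 by (intro mult_left_mono) auto
    then show "a0 + K * t1 \<le> 2 * a0" using KT by simp
  qed (use pe Kdef M in auto)
  have mlt: "m t1 r1 < \<Phi> (t1,r1)" using G1 by (simp add: G_def)
  have PhiM: "\<Phi> (t1,r1) \<le> M" using Phi_le[OF t1r1(1,3)] pe t1r1 by (smt (verit) divide_pos_pos mult_nonneg_nonneg)
  have "ham \<alpha> p2 (m t1 r1) = X * m t1 r1" by (simp add: ham_def X_def)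
  also have "\<dots> \<le> X * \<Phi> (t1,r1)" using X0 mlt by (intro mult_left_mono) auto
  also have "\<dots> \<le> K * gf c0 \<beta> r1"
  proof (cases "\<Phi> (t1,r1) \<ge> 0")
    case True
    have "X * \<Phi> (t1,r1) \<le> X * M" using X0 PhiM by (intro mult_left_mono) auto
    then show ?thesis using XM by simp
  next
    case False
    then have "X * \<Phi> (t1,r1) \<le> 0" using X0 by (simp add: mult_nonneg_nonpos)
    moreover have "K * gf c0 \<beta> r1 \<ge> 0" using Kp gf_nonneg[of c0 \<beta> r1] by simp
    ultimately show ?thesis by simp
  qed
  finally have "p1 + ham \<alpha> p2 (m t1 r1) \<le> - (\<eta> / (T - t1)^2)" by (simp add: p1_def)
  moreover have "\<eta> / (T - t1)^2 > 0" using pe t1r1 by simp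
  ultimately show False using ineq by linarith
qed



theorem mainTheorem8:
  fixes \<alpha> M c0 :: real and m0 :: "real \<Rightarrow> real" and m :: "real \<Rightarrow> real \<Rightarrow> real"
  assumes "\<alpha> > 1"
    and "BUC1 m0"
    and "mono_on {0..} m0"
    and "m0 0 = 0"
    and "M = (SUP \<rho>\<in>{0..}. m0 \<rho>)"
    and "M > 0"
    and "c0 > 0"
    and "\<forall>\<rho>\<in>{0..<c0}. m0 \<rho> < M"
    and "\<forall>\<rho>\<ge>c0. m0 \<rho> = M"
    and "Limsup (at_left c0) (\<lambda>\<rho>. ereal ((M - m0 \<rho>) / (c0 - \<rho>) powr (\<alpha> / (\<alpha> - 1)))) < \<infinity>"
    and "BUC2 m"
    and "visc_sol \<alpha> m0 m"
  shows "\<exists>T>0. \<forall>t\<in>{0..<T}. \<forall>\<rho>\<ge>c0. m t \<rho> = M"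
proof -
  note a = assms(1) and mono = assms(3) and m00 = assms(4) and Mp = assms(6) and c0 = assms(7)
    and below = assms(8) and above = assms(9) and ls = assms(10)
  define \<beta> where "\<beta> = \<alpha> / (\<alpha> - 1)"
  have bpos: "\<beta> > 0" using a by (simp add: \<beta>_def)
  have sub: "visc_subsol \<alpha> m0 m" and sup: "visc_supersol \<alpha> m0 m" using assms(12) by (auto simp: visc_sol_def)
  obtain B where B: "B \<ge> 0" "\<And>t r. t \<ge> 0 \<Longrightarrow> r \<ge> 0 \<Longrightarrow> \<bar>m t r\<bar> \<le> B" using BUC2_bound[OF assms(11)] by blast
  have m0M: "m0 \<rho> \<le> M" if "\<rho> \<ge> 0" for \<rho>
    using below above that by (cases "\<rho> < c0") (auto simp: less_imp_le)
  have m0pos: "m0 \<rho> \<ge> 0" if "\<rho> \<ge> 0" for \<rho>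
    using mono_onD[OF mono, of 0 \<rho>] that m00 by simp
  have mM: "m t r \<le> M" if "t \<ge> 0" "r \<ge> 0" for t r
    using upper[OF a sub m0M _ B that] Mp by simp
  obtain n :: nat where n: "Limsup (at_left c0) (\<lambda>\<rho>. ereal ((M - m0 \<rho>) / (c0 - \<rho>) powr \<beta>)) < ereal (real n)"
    using ls less_PInf_Ex_of_nat unfolding \<beta>_def by (metis less_ereal.simps(4) order_less_imp_not_less)
  then have "eventually (\<lambda>\<rho>. ereal ((M - m0 \<rho>) / (c0 - \<rho>) powr \<beta>) < ereal (real n)) (at_left c0)"
    by (rule Limsup_lessD)
  then obtain b where b: "b < c0" "\<And>y. y > b \<Longrightarrow> y < c0 \<Longrightarrow> (M - m0 y) / (c0 - y) powr \<beta> < real n"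
    using eventually_at_left[of "c0 - 1" c0] by auto
  define h where "h = min (c0 - b) c0"
  have hp: "h > 0" "h \<le> c0" "c0 - h \<ge> b" using b c0 by (auto simp: h_def)
  define a0 where "a0 = max (real n) (M / h powr \<beta>)"
  have a0p: "a0 > 0" using Mp hp by (simp add: a0_def less_max_iff_disj)
  have hb: "h powr \<beta> > 0" using hp by simp
  have a0h: "a0 * h powr \<beta> \<ge> M"
  proof -
    have "M / h powr \<beta> \<le> a0" by (simp add: a0_def)
    then show ?thesis using hb by (simp add: field_simps)
  qed
  have init: "M - a0 * gf c0 \<beta> r \<le> m0 r" if r: "r \<ge> 0" for r
  proof (cases "r < c0")
    case False then show ?thesis using above by (simp add: gf_def)
  next
    case True
    have g: "gf c0 \<beta> r = (c0 - r) powr \<beta>" using True by (simp add: gf_def)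
    have cp: "(c0 - r) powr \<beta> > 0" using True by simp
    show ?thesis
    proof (cases "r > c0 - h")
      case True2: True
      have "(M - m0 r) / (c0 - r) powr \<beta> < real n" using b(2)[of r] True True2 hp by simp
      then have "M - m0 r < real n * (c0 - r) powr \<beta>" using cp by (simp add: divide_less_eq)
      also have "\<dots> \<le> a0 * (c0 - r) powr \<beta>" using cp by (intro mult_right_mono) (auto simp: a0_def)
      finally show ?thesis using g by simp
    next
      case False
      then have "h \<le> c0 - r" by simp
      then have "h powr \<beta> \<le> (c0 - r) powr \<beta>" using hp bpos by (intro powr_mono2) auto
      then have "a0 * h powr \<beta> \<le> a0 * (c0 - r) powr \<beta>" using a0p by (intro mult_left_mono) auto
      then show ?thesis using a0h m0pos[OF r] g by simp
    qed
  qed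
  have bnd0: "a0 * gf c0 \<beta> 0 \<ge> M"
  proof -
    have "h powr \<beta> \<le> c0 powr \<beta>" using hp bpos by (intro powr_mono2) auto
    then have "a0 * h powr \<beta> \<le> a0 * c0 powr \<beta>" using a0p by (intro mult_left_mono) auto
    then show ?thesis using a0h c0 by (simp add: gf_def)
  qed
  define K where "K = (2*a0) powr \<alpha> * \<beta> powr \<alpha> * M"
  define T where "T = a0 / K"
  have Kp: "K > 0" using a0p bpos Mp by (simp add: K_def)
  have Tp: "T > 0" using a0p Kp by (simp add: T_def)
  show ?thesis
  proof (intro exI[of _ T] conjI ballI allI impI)
    show "T > 0" by (rule Tp)
    fix t \<rho> assume t: "t \<in> {0..<T}" and \<rho>: "\<rho> \<ge> c0"
    have t0: "0 \<le> t" "t < T" using t by auto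
    have r0: "\<rho> \<ge> 0" using \<rho> c0 by simp
    have gz: "gf c0 \<beta> \<rho> = 0" using \<rho> by (simp add: gf_def)
    have low: "m t \<rho> \<ge> M - \<eta> / (T - t) - \<epsilon> * \<rho>" if "\<eta> > 0" "\<epsilon> > 0" for \<eta> \<epsilon>
      using lower_core[OF a sup \<beta>_def mM B Mp a0p init bnd0 K_def T_def that t0 r0] gz by simp
    show "m t \<rho> = M"
    proof (rule antisym)
      show "m t \<rho> \<le> M" using mM t0 r0 by simp
      show "M \<le> m t \<rho>"
      proof (rule ccontr)
        assume "\<not> M \<le> m t \<rho>"
        define g where "g = M - m t \<rho>"
        have gp: "g > 0" using \<open>\<not> M \<le> m t \<rho>\<close> by (simp add: g_def)
        have Tt: "T - t > 0" using t0 by simp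
        have "m t \<rho> \<ge> M - (g * (T - t) / 3) / (T - t) - (g / (3 * (\<rho> + 1))) * \<rho>"
          using low[of "g * (T - t) / 3" "g / (3 * (\<rho> + 1))"] gp Tt r0 by simp
        moreover have "(g * (T - t) / 3) / (T - t) = g / 3" using Tt by (auto simp: divide_simps)
        moreover have "(g / (3 * (\<rho> + 1))) * \<rho> \<le> g / 3" using gp r0 by (simp add: field_simps)
        ultimately have "m t \<rho> \<ge> M - g / 3 - g / 3" by linarith
        then show False using gp unfolding g_def by (simp add: field_simps)
      qed
    qed
  qed
qed

end
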